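(* Let $\bar N_{\rm p}=2^r$ with $r\ge1$ and $N_{\rm p}=\bar N_{\rm p}^2$. Let $\boldsymbol B:=(\boldsymbol H_{\bar N_{\rm p}}\otimes\boldsymbol H_{\bar N_{\rm p}})^*\boldsymbol\Psi_{\rm idhw}\in\mathbb R^{N_{\rm p}\times N_{\rm p}}$. For each $l_{\rm p}=\bar N_{\rm p}(l_{\rm y}-1)+l_{\rm x}$ with $l_{\rm x},l_{\rm y}\in\{1,\dots,\bar N_{\rm p}\}$, define the local coherence $\mu_{l_{\rm p}}:=\max_j|B_{l_{\rm p},j}|$. Then $$\mu_{l_{\rm p}}=\kappa^{\rm p}_{l_{\rm p}}:=\min\{1,2^{-\lfloor\log_2(\max\{l_{\rm x},l_{\rm y}\}-1)\rfloor}\},$$ with the convention $\log_2 0=-\infty$, so that $\kappa^{\rm p}_{l_{\rm p}}=1$ when $l_{\rm x}=l_{\rm y}=1$. Moreover, $$\sum_{l_{\rm p}=1}^{N_{\rm p}}(\kappa^{\rm p}_{l_{\rm p}})^2=1+3\log_2(\bar N_{\rm p}).$$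
   Context: Let $\boldsymbol a=[1,1]^\top$ and $\boldsymbol b=[1,-1]^\top$. Paley-ordered Hadamard matrix: $\boldsymbol H_1=[1]$ and $\boldsymbol H_n=\tfrac1{\sqrt2}[\boldsymbol H_{n/2}\otimes\boldsymbol a,\ \boldsymbol H_{n/2}\otimes\boldsymbol b]$. Haar matrices: $\boldsymbol W_1=[1]$ and $\boldsymbol W_n=\tfrac1{\sqrt2}[\boldsymbol W_{n/2}\otimes\boldsymbol a,\ \boldsymbol I_{n/2}\otimes\boldsymbol b]$. Also $\boldsymbol W^0_1=[1]$ and $\boldsymbol W^0_n=\tfrac1{\sqrt2}[\boldsymbol W^0_{n/2}\otimes\boldsymbol a,\ \boldsymbol I_{n/2}\otimes\boldsymbol a]$. Dyadic levels: $\mathcal T_0=\{1\}$ and $\mathcal T_\ell=\{2^{\ell-1}+1,\dots,2^\ell\}$ for $\ell\ge1$. For an index set $S$, $\boldsymbol A\boldsymbol P_S^\top$ denotes the submatrix of columns of $\boldsymbol A$ indexed by $S$. 2-D isotropic Haar basis: $\boldsymbol\Psi_{\rm idhw}=[\boldsymbol\Psi_0,\boldsymbol\Psi_1,\boldsymbol\Psi_2,\boldsymbol\Psi_3]$, where $\boldsymbol\Psi_0=N_{\rm p}^{-1/2}\boldsymbol 1_{N_{\rm p}}$ and, for $i\in\{1,2,3\}$, $\boldsymbol\Psi_i=[\boldsymbol\Psi_{i,1},\dots,\boldsymbol\Psi_{i,r}]$ with - $\boldsymbol\Psi_{1,\ell}=(\boldsymbol W^0_{\bar N_{\rm p}}\boldsymbol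 P_{\mathcal T_\ell}^\top)\otimes(\boldsymbol W_{\bar N_{\rm p}}\boldsymbol P_{\mathcal T_\ell}^\top)$, - $\boldsymbol\Psi_{2,\ell}=(\boldsymbol W_{\bar N_{\rm p}}\boldsymbol P_{\mathcal T_\ell}^\top)\otimes(\boldsymbol W^0_{\bar N_{\rm p}}\boldsymbol P_{\mathcal T_\ell}^\top)$, - $\boldsymbol\Psi_{3,\ell}=(\boldsymbol W_{\bar N_{\rm p}}\boldsymbol P_{\mathcal T_\ell}^\top)\otimes(\boldsymbol W_{\bar N_{\rm p}}\boldsymbol P_{\mathcal T_\ell}^\top)$. *)

theory Defs
  imports Complex_Main
begin

text \<open>Matrices are represented as functions nat => nat => real with 0-based
  indices; the dimensions are tracked explicitly. Entries outside the stated
  dimensions are irrelevant.\<close>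

type_synonym mat = "nat \<Rightarrow> nat \<Rightarrow> real"

definition kron :: "nat \<Rightarrow> nat \<Rightarrow> mat \<Rightarrow> mat \<Rightarrow> mat" where
  "kron p q A B = (\<lambda>i j. A (i div p) (j div q) * B (i mod p) (j mod q))"

definition hcat :: "nat \<Rightarrow> mat \<Rightarrow> mat \<Rightarrow> mat" where
  "hcat n A B = (\<lambda>i j. if j < n then A i j else B i (j - n))"

definition msmult :: "real \<Rightarrow> mat \<Rightarrow> mat" where
  "msmult c A = (\<lambda>i j. c * A i j)"

definition mtranspose :: "mat \<Rightarrow> mat" where
  "mtranspose A = (\<lambda>i j. A j i)"

definition mmult :: "nat \<Rightarrow> mat \<Rightarrow> mat \<Rightarrow> mat" where
  "mmult n A B = (\<lambda>i j. \<Sum>k<n. A i k * B k j)"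

definition idm :: mat where
  "idm = (\<lambda>i j. if i = j then 1 else 0)"

definition vec_a :: mat where "vec_a = (\<lambda>i j. 1)"
definition vec_b :: mat where "vec_b = (\<lambda>i j. if i = 0 then 1 else -1)"

text \<open>Paley-ordered Hadamard matrix H_{2^r} (size 2^r x 2^r).\<close>
fun hadamard :: "nat \<Rightarrow> mat" where
  "hadamard 0 = (\<lambda>i j. 1)"
| "hadamard (Suc r) = msmult (1 / sqrt 2)
     (hcat (2^r) (kron 2 1 (hadamard r) vec_a) (kron 2 1 (hadamard r) vec_b))"

fun haar :: "nat \<Rightarrow> mat" where
  "haar 0 = (\<lambda>i j. 1)"
| "haar (Suc r) = msmult (1 / sqrt 2)
     (hcat (2^r) (kron 2 1 (haar r) vec_a) (kron 2 1 idm vec_b))"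

fun haar0 :: "nat \<Rightarrow> mat" where
  "haar0 0 = (\<lambda>i j. 1)"
| "haar0 (Suc r) = msmult (1 / sqrt 2)
     (hcat (2^r) (kron 2 1 (haar0 r) vec_a) (kron 2 1 idm vec_a))"

text \<open>A P_{T_l}^T for l >= 1: the columns with 1-based indices 2^(l-1)+1..2^l,
  i.e. 0-based indices 2^(l-1)..2^l-1 (2^(l-1) columns).\<close>
definition dyadic_cols :: "mat \<Rightarrow> nat \<Rightarrow> mat" where
  "dyadic_cols A l = (\<lambda>i j. A i (2^(l-1) + j))"

definition psi_block :: "mat \<Rightarrow> mat \<Rightarrow> nat \<Rightarrow> nat \<Rightarrow> mat" where
  "psi_block U V r l = kron (2^r) (2^(l-1)) (dyadic_cols U l) (dyadic_cols V l)"

text \<open>Number of columns of [Psi_{i,1},...,Psi_{i,L}].\<close>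
definition levels_width :: "nat \<Rightarrow> nat" where
  "levels_width L = (\<Sum>l=1..L. 4^(l-1))"

fun psi_levels :: "mat \<Rightarrow> mat \<Rightarrow> nat \<Rightarrow> nat \<Rightarrow> mat" where
  "psi_levels U V r 0 = (\<lambda>i j. 0)"
| "psi_levels U V r (Suc L) =
     hcat (levels_width L) (psi_levels U V r L) (psi_block U V r (Suc L))"

definition psi_idhw :: "nat \<Rightarrow> mat" where
  "psi_idhw r =
    (let w = levels_width r;
         P0 = (\<lambda>i j. 1 / sqrt (real (4^r)));
         P1 = psi_levels (haar0 r) (haar r) r r;
         P2 = psi_levels (haar r) (haar0 r) r r;
         P3 = psi_levels (haar r) (haar r) r r
     in hcat 1 P0 (hcat w P1 (hcat w P2 P3)))"

text \<open>B = (H (x) H)^* Psi_idhw (real, so ^* is the transpose).\<close>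
definition Bmat :: "nat \<Rightarrow> mat" where
  "Bmat r = mmult (4^r) (mtranspose (kron (2^r) (2^r) (hadamard r) (hadamard r)))
              (psi_idhw r)"

text \<open>Local coherence mu_{lp} = max_j |B_{lp,j}|, lp 1-based.\<close>
definition local_coherence :: "nat \<Rightarrow> nat \<Rightarrow> real" where
  "local_coherence r lp = Max {\<bar>Bmat r (lp - 1) j\<bar> | j. j < 4^r}"

definition kappa_xy :: "nat \<Rightarrow> nat \<Rightarrow> real" where
  "kappa_xy lx ly = (if max lx ly = 1 then 1
      else min 1 (2 powr (- real_of_int \<lfloor>log 2 (real (max lx ly) - 1)\<rfloor>)))"

definition kappa_p :: "nat \<Rightarrow> nat \<Rightarrow> real" where
  "kappa_p Nbar lp = kappa_xy ((lp - 1) mod Nbar + 1) ((lp - 1) div Nbar + 1)"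

end

theory Submission
  imports Defs "HOL-Library.Log_Nat"
begin


lemma sum_divmod:
  fixes f :: "nat \<Rightarrow> nat \<Rightarrow> real"
  shows "(\<Sum>i<n*k. f (i div k) (i mod k)) = (\<Sum>a<n. \<Sum>b<k. f a b)"
proof -
  have "(\<Sum>i<n*k. f (i div k) (i mod k)) = (\<Sum>a<n. \<Sum>i\<in>{a*k..<a*k+k}. f (i div k) (i mod k))"
    by (rule sum.nat_group[symmetric])
  also have "\<dots> = (\<Sum>a<n. \<Sum>b<k. f a b)"
  proof (rule sum.cong[OF refl])
    fix a assume "a \<in> {..<n}"
    have "(\<Sum>i\<in>{a*k..<a*k+k}. f (i div k) (i mod k)) = (\<Sum>i\<in>{0+a*k..<k+a*k}. f (i div k) (i mod k))"
      by (simp add: add.commute)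
    also have "\<dots> = (\<Sum>b\<in>{0..<k}. f ((b+a*k) div k) ((b+a*k) mod k))"
      by (rule sum.shift_bounds_nat_ivl)
    also have "\<dots> = (\<Sum>b<k. f a b)"
      by (rule sum.cong) auto
    finally show "(\<Sum>i\<in>{a*k..<a*k+k}. f (i div k) (i mod k)) = (\<Sum>b<k. f a b)" .
  qed
  finally show ?thesis .
qed

lemma sum_double:
  fixes g :: "nat \<Rightarrow> real"
  shows "(\<Sum>i<2*n. g i) = (\<Sum>k<n. g (2*k) + g (2*k+1))"
proof -
  have "(\<Sum>i<n*2. g (i div 2 * 2 + i mod 2)) = (\<Sum>k<n. \<Sum>e<2. g (k*2+e))"
    by (rule sum_divmod)
  hence "(\<Sum>i<n*2. g i) = (\<Sum>k<n. \<Sum>e<2. g (k*2+e))" by simp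
  thus ?thesis by (simp add: mult.commute numeral_2_eq_2)
qed

abbreviation lev :: "nat \<Rightarrow> nat" where "lev q \<equiv> floorlog 2 q"

lemma lev_le: "p < 2^r \<Longrightarrow> lev p \<le> r"
  by (rule floorlog_leI) auto

lemma lev_top: "2^r \<le> p \<Longrightarrow> p < 2^Suc r \<Longrightarrow> lev p = Suc r"
  using floorlog_leI[of p 2 "Suc r"] floorlog_ge_SucI[of 2 r p] by auto

lemma lev_0[simp]: "lev 0 = 0" by (simp add: floorlog_def)

lemma lev_pos: "q > 0 \<Longrightarrow> lev q \<ge> 1"
  by (simp add: floorlog_def)

lemma lev_bounds: "q > 0 \<Longrightarrow> 2^(lev q - 1) \<le> q \<and> q < 2^lev q"
  using floorlog_bounds[of q 2] by simp

lemma lev_max: "lev (max a b) = max (lev a) (lev b)"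
  by (simp add: max_def floorlog_mono le_antisym)

lemma lev_floor: "M > 0 \<Longrightarrow> \<lfloor>log 2 (real M)\<rfloor> = int (lev M - 1)"
  by (simp add: floorlog_def)



lemma had_Suc: "hadamard (Suc r) i j = (1/sqrt 2) * (if j < 2^r then hadamard r (i div 2) j
   else hadamard r (i div 2) (j - 2^r) * (if i mod 2 = 0 then 1 else -1))"
  by (simp add: msmult_def hcat_def kron_def vec_a_def vec_b_def)

lemma haar_Suc: "haar (Suc r) i j = (1/sqrt 2) * (if j < 2^r then haar r (i div 2) j
   else (if i div 2 = j - 2^r then 1 else 0) * (if i mod 2 = 0 then 1 else -1))"
  by (simp add: msmult_def hcat_def kron_def vec_a_def vec_b_def idm_def)

lemma haar0_Suc: "haar0 (Suc r) i j = (1/sqrt 2) * (if j < 2^r then haar0 r (i div 2) j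
   else (if i div 2 = j - 2^r then 1 else 0))"
  by (simp add: msmult_def hcat_def kron_def vec_a_def vec_b_def idm_def)

definition G :: "nat \<Rightarrow> nat \<Rightarrow> nat \<Rightarrow> real" where
  "G r p q = (\<Sum>k<2^r. hadamard r k p * haar r k q)"
definition G0 :: "nat \<Rightarrow> nat \<Rightarrow> nat \<Rightarrow> real" where
  "G0 r p q = (\<Sum>k<2^r. hadamard r k p * haar0 r k q)"

lemma hsq: "1/sqrt 2 * (1/sqrt 2) = (1/2::real)"
  by (simp add: divide_simps)

lemma G_Suc: assumes qb: "q < 2^Suc r" shows "G (Suc r) p q = (if p < 2^r \<and> q < 2^r then G r p q
   else if p \<ge> 2^r \<and> q \<ge> 2^r \<and> q < 2^Suc r then hadamard r (q - 2^r) (p - 2^r) else 0)"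
proof -
  have "G (Suc r) p q = (\<Sum>k<2^r. hadamard (Suc r) (2*k) p * haar (Suc r) (2*k) q
         + hadamard (Suc r) (2*k+1) p * haar (Suc r) (2*k+1) q)"
    unfolding G_def by (simp add: sum_double)
  also have "\<dots> = (\<Sum>k<2^r. (if p < 2^r \<and> q < 2^r then hadamard r k p * haar r k q
      else if p \<ge> 2^r \<and> q \<ge> 2^r then (if k = q - 2^r then hadamard r k (p - 2^r) else 0) else 0))"
  proof (rule sum.cong[OF refl])
    fix k :: nat
    have d1: "(2*k) div 2 = k" "(2*k+1) div 2 = k" "(2*k) mod 2 = 0" "(2*k+1) mod 2 = 1" by auto
    show "hadamard (Suc r) (2*k) p * haar (Suc r) (2*k) q
         + hadamard (Suc r) (2*k+1) p * haar (Suc r) (2*k+1) q = (if p < 2^r \<and> q < 2^r then hadamard r k p * haar r k q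
      else if p \<ge> 2^r \<and> q \<ge> 2^r then (if k = q - 2^r then hadamard r k (p - 2^r) else 0) else 0)"
      unfolding had_Suc haar_Suc d1 using hsq by (auto simp: algebra_simps)
  qed
  also have "\<dots> = (if p < 2^r \<and> q < 2^r then G r p q
   else if p \<ge> 2^r \<and> q \<ge> 2^r \<and> q < 2^Suc r then hadamard r (q - 2^r) (p - 2^r) else 0)"
  proof -
    have "q \<ge> 2^r \<Longrightarrow> q - 2^r < 2^r" using qb by auto
    thus ?thesis unfolding G_def by (auto simp: sum.delta' split: if_splits)
  qed
  finally show ?thesis .
qed
lemma G0_Suc: assumes qb: "q < 2^Suc r" shows "G0 (Suc r) p q = (if p < 2^r \<and> q < 2^r then G0 r p q
   else if p < 2^r \<and> q \<ge> 2^r then hadamard r (q - 2^r) p else 0)"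
proof -
  have "G0 (Suc r) p q = (\<Sum>k<2^r. hadamard (Suc r) (2*k) p * haar0 (Suc r) (2*k) q
         + hadamard (Suc r) (2*k+1) p * haar0 (Suc r) (2*k+1) q)"
    unfolding G0_def by (simp add: sum_double)
  also have "\<dots> = (\<Sum>k<2^r. (if p < 2^r \<and> q < 2^r then hadamard r k p * haar0 r k q
      else if p < 2^r \<and> q \<ge> 2^r then (if k = q - 2^r then hadamard r k p else 0) else 0))"
  proof (rule sum.cong[OF refl])
    fix k :: nat
    have d1: "(2*k) div 2 = k" "(2*k+1) div 2 = k" "(2*k) mod 2 = 0" "(2*k+1) mod 2 = 1" by auto
    show "hadamard (Suc r) (2*k) p * haar0 (Suc r) (2*k) q
         + hadamard (Suc r) (2*k+1) p * haar0 (Suc r) (2*k+1) q = (if p < 2^r \<and> q < 2^r then hadamard r k p * haar0 r k q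
      else if p < 2^r \<and> q \<ge> 2^r then (if k = q - 2^r then hadamard r k p else 0) else 0)"
      unfolding had_Suc haar0_Suc d1 using hsq by (auto simp: algebra_simps)
  qed
  also have "\<dots> = (if p < 2^r \<and> q < 2^r then G0 r p q
   else if p < 2^r \<and> q \<ge> 2^r then hadamard r (q - 2^r) p else 0)"
  proof -
    have "q \<ge> 2^r \<Longrightarrow> q - 2^r < 2^r" using qb by auto
    thus ?thesis unfolding G0_def by (auto simp: sum.delta' split: if_splits)
  qed
  finally show ?thesis .
qed

lemma abs_had: "\<bar>hadamard r i j\<bar> = (1/sqrt 2)^r"
  by (induction r arbitrary: i j) (simp_all add: had_Suc abs_mult del: hadamard.simps(2))

lemma haar_col0: "haar r k 0 = (1/sqrt 2)^r"
  by (induction r arbitrary: k) (simp_all add: haar_Suc del: haar.simps(2))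

lemma abs_G: "p < 2^r \<Longrightarrow> q < 2^r \<Longrightarrow>
  \<bar>G r p q\<bar> = (if lev p = lev q then (1/sqrt 2)^(lev q - 1) else 0)"
proof (induction r arbitrary: p q)
  case 0
  thus ?case by (simp add: G_def)
next
  case (Suc r)
  show ?case
  proof (cases "p < 2^r \<and> q < 2^r")
    case True
    thus ?thesis using Suc.IH G_Suc[OF Suc.prems(2)] by simp
  next
    case False
    note GS = G_Suc[OF Suc.prems(2), of p]
    show ?thesis
    proof (cases "p \<ge> 2^r \<and> q \<ge> 2^r")
      case True
      hence "lev p = Suc r" "lev q = Suc r" using lev_top Suc.prems by auto
      thus ?thesis using True GS abs_had Suc.prems by simp
    next
      case F2: False
      have "lev p \<noteq> lev q"
      proof (cases "p < 2^r")
        case True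
        hence "q \<ge> 2^r" using False by auto
        thus ?thesis using lev_top[of r q] lev_le[of p r] True Suc.prems by auto
      next
        case F3: False
        hence "q < 2^r" using F2 by auto
        thus ?thesis using lev_top[of r p] lev_le[of q r] F3 Suc.prems by auto
      qed
      thus ?thesis using GS False F2 by auto
    qed
  qed
qed

lemma abs_G0: "p < 2^r \<Longrightarrow> q < 2^r \<Longrightarrow>
  \<bar>G0 r p q\<bar> = (if (q = 0 \<and> p = 0) \<or> (0 < q \<and> lev p < lev q) then (1/sqrt 2)^(lev q - 1) else 0)"
proof (induction r arbitrary: p q)
  case 0
  thus ?case by (simp add: G0_def)
next
  case (Suc r)
  note GS = G0_Suc[OF Suc.prems(2), of p]
  show ?case
  proof (cases "p < 2^r \<and> q < 2^r")
    case True
    thus ?thesis using Suc.IH GS by simp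
  next
    case False
    show ?thesis
    proof (cases "p < 2^r")
      case True
      hence q: "q \<ge> 2^r" using False by auto
      hence "lev q = Suc r" "lev p \<le> r" "q > 0" using lev_top lev_le True Suc.prems
        by (auto intro: order.strict_trans2[OF _ q])
      thus ?thesis using True q GS abs_had by simp
    next
      case F3: False
      hence "lev p = Suc r" "p > 0" using lev_top Suc.prems
        by (auto intro: order.strict_trans2[of 0 1 "2^r"])
      moreover have "lev q \<le> Suc r" using lev_le Suc.prems by blast
      ultimately show ?thesis using GS F3 by auto
    qed
  qed
qed



lemma lw_Suc: "levels_width (Suc L) = levels_width L + 4^L"
  by (simp add: levels_width_def)

lemma lw_4: "3 * levels_width r + 1 = 4^r"
  by (induction r) (simp_all add: lw_Suc levels_width_def[of 0])

lemma pb_eval: "psi_block U V r l i c = U (i div 2^r) (2^(l-1) + c div 2^(l-1)) * V (i mod 2^r) (2^(l-1) + c mod 2^(l-1))"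
  by (simp add: psi_block_def kron_def dyadic_cols_def)

lemma psi_levels_fwd: "j < levels_width L \<Longrightarrow> \<exists>l u v. 1 \<le> l \<and> l \<le> L \<and> 2^(l-1) \<le> u \<and> u < 2^l
   \<and> 2^(l-1) \<le> v \<and> v < 2^l \<and> (\<forall>i. psi_levels U V r L i j = U (i div 2^r) u * V (i mod 2^r) v)"
proof (induction L arbitrary: j)
  case 0
  thus ?case by (simp add: levels_width_def)
next
  case (Suc L)
  show ?case
  proof (cases "j < levels_width L")
    case True
    from Suc.IH[OF True] obtain l u v where h: "1 \<le> l \<and> l \<le> L \<and> 2^(l-1) \<le> u \<and> u < 2^l
   \<and> 2^(l-1) \<le> v \<and> v < 2^l \<and> (\<forall>i. psi_levels U V r L i j = U (i div 2^r) u * V (i mod 2^r) v)" by blast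
    show ?thesis
      apply (rule exI[of _ l], rule exI[of _ u], rule exI[of _ v])
      using h True by (simp add: hcat_def)
  next
    case False
    define c where "c = j - levels_width L"
    have c: "c < 2^L * 2^L" using Suc.prems False by (simp add: c_def lw_Suc power_mult_distrib[symmetric])
    have cd: "c div 2^L < 2^L" using c by (simp add: less_mult_imp_div_less)
    have cm: "c mod 2^L < 2^L" by simp
    show ?thesis
      apply (rule exI[of _ "Suc L"], rule exI[of _ "2^L + c div 2^L"], rule exI[of _ "2^L + c mod 2^L"])
      using False cd cm by (simp add: hcat_def pb_eval c_def)
  qed
qed

lemma psi_levels_bwd: "1 \<le> l \<Longrightarrow> l \<le> L \<Longrightarrow> 2^(l-1) \<le> u \<Longrightarrow> u < 2^l \<Longrightarrow> 2^(l-1) \<le> v \<Longrightarrow> v < 2^l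
  \<Longrightarrow> \<exists>j < levels_width L. (\<forall>i. psi_levels U V r L i j = U (i div 2^r) u * V (i mod 2^r) v)"
proof (induction L)
  case 0
  thus ?case by simp
next
  case (Suc L)
  show ?case
  proof (cases "l \<le> L")
    case True
    with Suc obtain j where "j < levels_width L" "\<forall>i. psi_levels U V r L i j = U (i div 2^r) u * V (i mod 2^r) v"
      by blast
    thus ?thesis by (intro exI[of _ j]) (simp add: hcat_def lw_Suc)
  next
    case False
    hence l: "l = Suc L" using Suc.prems by simp
    define c where "c = (u - 2^L) * 2^L + (v - 2^L)"
    have vb: "v - 2^L < 2^L" "u - 2^L < 2^L" using Suc.prems l by auto
    have cdiv: "c div 2^L = u - 2^L" "c mod 2^L = v - 2^L" using vb by (simp_all add: c_def)
    have "c < 2^L * 2^L"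
    proof -
      have "c < (u - 2^L) * 2^L + 2^L" using vb by (simp add: c_def)
      also have "\<dots> = Suc (u - 2^L) * 2^L" by simp
      also have "\<dots> \<le> 2^L * 2^L" using vb(2) by (intro mult_right_mono) auto
      finally show ?thesis .
    qed
    hence "c < 4^L" by (simp add: power_mult_distrib[symmetric])
    show ?thesis
      apply (rule exI[of _ "levels_width L + c"])
      using \<open>c < 4^L\<close> cdiv Suc.prems l by (simp add: hcat_def lw_Suc pb_eval)
  qed
qed



definition colf :: "nat \<Rightarrow> mat \<Rightarrow> nat \<Rightarrow> mat \<Rightarrow> nat \<Rightarrow> nat \<Rightarrow> bool" where
  "colf r X u Y v j \<longleftrightarrow> (\<forall>i. psi_idhw r i j = X (i div 2^r) u * Y (i mod 2^r) v)"

lemma p0val: "1 / sqrt ((4::real)^r) = (1/sqrt 2)^r * (1/sqrt 2::real)^r"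
proof -
  have "sqrt (real (4^r)) = 2^r"
    by (simp add: power_mult_distrib[symmetric] real_sqrt_power) 
  moreover have "(1/sqrt 2)^r * (1/sqrt 2::real)^r = (1/2)^r"
    by (simp add: power_mult_distrib[symmetric] hsq)
  ultimately show ?thesis by (simp add: power_one_over)
qed

lemma idhw_fwd: assumes "j < 4^r"
  shows "colf r (haar r) 0 (haar r) 0 j \<or> (\<exists>l u v. 1 \<le> l \<and> l \<le> r \<and> 2^(l-1) \<le> u \<and> u < 2^l
   \<and> 2^(l-1) \<le> v \<and> v < 2^l \<and> (colf r (haar0 r) u (haar r) v j \<or> colf r (haar r) u (haar0 r) v j
     \<or> colf r (haar r) u (haar r) v j))"
proof -
  let ?w = "levels_width r"
  have jb: "j < 3 * ?w + 1" using assms lw_4[of r] by simp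
  show ?thesis
  proof (cases "j = 0")
    case True
    thus ?thesis by (simp add: colf_def psi_idhw_def hcat_def haar_col0 p0val Let_def)
  next
    case j0: False
    show ?thesis
    proof (cases "j - 1 < ?w")
      case True
      from psi_levels_fwd[OF True, of "haar0 r" "haar r" r] obtain l u v where h: "1 \<le> l \<and> l \<le> r \<and> 2^(l-1) \<le> u \<and> u < 2^l
   \<and> 2^(l-1) \<le> v \<and> v < 2^l \<and> (\<forall>i. psi_levels (haar0 r) (haar r) r r i (j-1) = haar0 r (i div 2^r) u * haar r (i mod 2^r) v)" by blast
      hence "colf r (haar0 r) u (haar r) v j" using j0 True by (simp add: colf_def psi_idhw_def hcat_def Let_def)
      thus ?thesis using h by blast
    next
      case F1: False
      show ?thesis
      proof (cases "j - 1 - ?w < ?w")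
        case True
        from psi_levels_fwd[OF True, of "haar r" "haar0 r" r] obtain l u v where h: "1 \<le> l \<and> l \<le> r \<and> 2^(l-1) \<le> u \<and> u < 2^l
   \<and> 2^(l-1) \<le> v \<and> v < 2^l \<and> (\<forall>i. psi_levels (haar r) (haar0 r) r r i (j-1-?w) = haar r (i div 2^r) u * haar0 r (i mod 2^r) v)" by blast
        hence "colf r (haar r) u (haar0 r) v j" using j0 True F1 by (simp add: colf_def psi_idhw_def hcat_def Let_def)
        thus ?thesis using h by blast
      next
        case F2: False
        have T: "j - 1 - ?w - ?w < ?w" using jb F1 F2 j0 by auto
        from psi_levels_fwd[OF T, of "haar r" "haar r" r] obtain l u v where h: "1 \<le> l \<and> l \<le> r \<and> 2^(l-1) \<le> u \<and> u < 2^l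
   \<and> 2^(l-1) \<le> v \<and> v < 2^l \<and> (\<forall>i. psi_levels (haar r) (haar r) r r i (j-1-?w-?w) = haar r (i div 2^r) u * haar r (i mod 2^r) v)" by blast
        hence "colf r (haar r) u (haar r) v j" using j0 F2 F1 by (simp add: colf_def psi_idhw_def hcat_def Let_def)
        thus ?thesis using h by blast
      qed
    qed
  qed
qed

lemma idhw_bwd0: "colf r (haar r) 0 (haar r) 0 0"
  by (simp add: colf_def psi_idhw_def hcat_def haar_col0 p0val Let_def)

lemma idhw_bwd: assumes "1 \<le> l" "l \<le> r" "2^(l-1) \<le> u" "u < 2^l" "2^(l-1) \<le> v" "v < 2^l"
  shows "\<exists>j<4^r. colf r (haar0 r) u (haar r) v j"
    "\<exists>j<4^r. colf r (haar r) u (haar0 r) v j"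
    "\<exists>j<4^r. colf r (haar r) u (haar r) v j"
proof -
  let ?w = "levels_width r"
  have e: "4^r = 3 * ?w + 1" using lw_4[of r] by simp
  obtain j1 where j1: "j1 < ?w" "\<forall>i. psi_levels (haar0 r) (haar r) r r i j1 = haar0 r (i div 2^r) u * haar r (i mod 2^r) v"
    using psi_levels_bwd[OF assms] by blast
  show "\<exists>j<4^r. colf r (haar0 r) u (haar r) v j"
    apply (rule exI[of _ "j1 + 1"]) using j1 e by (simp add: colf_def psi_idhw_def hcat_def Let_def)
  obtain j2 where j2: "j2 < ?w" "\<forall>i. psi_levels (haar r) (haar0 r) r r i j2 = haar r (i div 2^r) u * haar0 r (i mod 2^r) v"
    using psi_levels_bwd[OF assms] by blast
  show "\<exists>j<4^r. colf r (haar r) u (haar0 r) v j"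
    apply (rule exI[of _ "j2 + ?w + 1"]) using j2 e by (simp add: colf_def psi_idhw_def hcat_def Let_def)
  obtain j3 where j3: "j3 < ?w" "\<forall>i. psi_levels (haar r) (haar r) r r i j3 = haar r (i div 2^r) u * haar r (i mod 2^r) v"
    using psi_levels_bwd[OF assms] by blast
  show "\<exists>j<4^r. colf r (haar r) u (haar r) v j"
    apply (rule exI[of _ "j3 + ?w + ?w + 1"]) using j3 e by (simp add: colf_def psi_idhw_def hcat_def Let_def)
qed

lemma Bmat_colf: assumes "colf r X u Y v j"
  shows "Bmat r row j = (\<Sum>a<2^r. hadamard r a (row div 2^r) * X a u) * (\<Sum>b<2^r. hadamard r b (row mod 2^r) * Y b v)"
proof -
  have "Bmat r row j = (\<Sum>k<2^r*2^r. (hadamard r (k div 2^r) (row div 2^r) * X (k div 2^r) u) *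
       (hadamard r (k mod 2^r) (row mod 2^r) * Y (k mod 2^r) v))"
    using assms unfolding Bmat_def mmult_def mtranspose_def kron_def colf_def
    by (simp add: power_mult_distrib[symmetric] algebra_simps)
  also have "\<dots> = (\<Sum>a<2^r. \<Sum>b<2^r. (hadamard r a (row div 2^r) * X a u) *
       (hadamard r b (row mod 2^r) * Y b v))"
    by (rule sum_divmod)
  also have "\<dots> = (\<Sum>a<2^r. hadamard r a (row div 2^r) * X a u) * (\<Sum>b<2^r. hadamard r b (row mod 2^r) * Y b v)"
    by (simp add: sum_product)
  finally show ?thesis .
qed


lemma csq: "(1/sqrt 2)^k * (1/sqrt 2::real)^k = (1/2)^k"
  by (simp add: power_mult_distrib[symmetric] hsq)

lemma lev_in: "1 \<le> l \<Longrightarrow> 2^(l-1) \<le> u \<Longrightarrow> u < 2^l \<Longrightarrow> lev u = l"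
  using lev_top[of "l-1" u] by simp

lemma entry_bound:
  assumes py: "py < 2^r" and px: "px < 2^r" and j: "j < 4^r"
  shows "\<bar>Bmat r (2^r*py + px) j\<bar> \<le> (1/2)^(lev (max py px) - 1)"
proof -
  let ?row = "2^r*py + px"
  have rd: "?row div 2^r = py" "?row mod 2^r = px" using px by auto
  let ?k = "(1/2::real)^(lev (max py px) - 1)"
  have kpos: "0 \<le> ?k" by simp
  note cases = idhw_fwd[OF j]
  show ?thesis
  proof (cases "colf r (haar r) 0 (haar r) 0 j")
    case True
    have "Bmat r ?row j = G r py 0 * G r px 0"
      using Bmat_colf[OF True] rd by (simp add: G_def)
    hence "\<bar>Bmat r ?row j\<bar> = \<bar>G r py 0\<bar> * \<bar>G r px 0\<bar>" by (simp add: abs_mult)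
    thus ?thesis using abs_G[OF py, of 0] abs_G[OF px, of 0] kpos
      by (auto simp: floorlog_eq_zero_iff)
  next
    case False
    then obtain l u v where h: "1 \<le> l" "l \<le> r" "2^(l-1) \<le> u" "u < 2^l" "2^(l-1) \<le> v" "v < 2^l"
      and cc: "colf r (haar0 r) u (haar r) v j \<or> colf r (haar r) u (haar0 r) v j \<or> colf r (haar r) u (haar r) v j"
      using cases by blast
    have lu: "lev u = l" "lev v = l" using lev_in h by auto
    have pl: "(2::nat)^l \<le> 2^r" using h by (simp add: power_increasing)
    have ub: "u < 2^r" "v < 2^r" using less_le_trans[OF h(4) pl] less_le_trans[OF h(6) pl] by auto
    have up: "u > 0" "v > 0" using h by (auto intro: order.strict_trans2[OF _ h(3)] order.strict_trans2[OF _ h(5)])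
    have lm: "lev (max py px) = max (lev py) (lev px)" by (rule lev_max)
    note C = csq[of "l-1"]
    from cc show ?thesis
    proof (elim disjE)
      assume c: "colf r (haar0 r) u (haar r) v j"
      have "Bmat r ?row j = G0 r py u * G r px v"
        using Bmat_colf[OF c] rd by (simp add: G_def G0_def)
      thus ?thesis using abs_G0[OF py ub(1)] abs_G[OF px ub(2)] lu up kpos lm C
        by (auto simp: abs_mult)
    next
      assume c: "colf r (haar r) u (haar0 r) v j"
      have "Bmat r ?row j = G r py u * G0 r px v"
        using Bmat_colf[OF c] rd by (simp add: G_def G0_def)
      thus ?thesis using abs_G[OF py ub(1)] abs_G0[OF px ub(2)] lu up kpos lm C
        by (auto simp: abs_mult)
    next
      assume c: "colf r (haar r) u (haar r) v j"
      have "Bmat r ?row j = G r py u * G r px v"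
        using Bmat_colf[OF c] rd by (simp add: G_def)
      thus ?thesis using abs_G[OF py ub(1)] abs_G[OF px ub(2)] lu up kpos lm C
        by (auto simp: abs_mult)
    qed
  qed
qed



lemma entry_attained:
  assumes py: "py < 2^r" and px: "px < 2^r"
  shows "\<exists>j<4^r. \<bar>Bmat r (2^r*py + px) j\<bar> = (1/2)^(lev (max py px) - 1)"
proof -
  let ?row = "2^r*py + px"
  have rd: "?row div 2^r = py" "?row mod 2^r = px" using px by auto
  have lm: "lev (max py px) = max (lev py) (lev px)" by (rule lev_max)
  show ?thesis
  proof (cases "max py px = 0")
    case True
    hence z: "py = 0" "px = 0" by auto
    have "Bmat r ?row 0 = G r py 0 * G r px 0"
      using Bmat_colf[OF idhw_bwd0] rd by (simp add: G_def)
    hence "\<bar>Bmat r ?row 0\<bar> = 1" using abs_G[OF py, of 0] abs_G[OF px, of 0] z by (simp add: abs_mult)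
    thus ?thesis using z by (intro exI[of _ 0]) simp
  next
    case False
    define L where "L = lev (max py px)"
    have l1: "1 \<le> L" using False lev_pos L_def by auto
    have lr: "L \<le> r" using lev_le[of "max py px" r] py px L_def by simp
    have C: "\<bar>(1/sqrt 2)^(L - 1)\<bar> * \<bar>(1/sqrt 2::real)^(L - 1)\<bar> = (1/2)^(L-1)"
      using csq[of "L - 1"] by simp
    have inl: "2^(L - 1) \<le> q \<and> q < 2^L" if lq: "lev q = L" for q
    proof -
      have "q > 0" using l1 lq by (cases q) auto
      thus ?thesis using lev_bounds[of q] lq by simp
    qed
    have "\<exists>j<4^r. \<bar>Bmat r ?row j\<bar> = (1/2)^(L - 1)"
    proof (cases "lev py = lev px")
      case True
      hence e: "lev py = L" "lev px = L" using lm L_def by auto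
      obtain j where j: "j < 4^r" "colf r (haar r) py (haar r) px j"
        using idhw_bwd(3)[OF l1 lr] inl[OF e(1)] inl[OF e(2)] by blast
      have "Bmat r ?row j = G r py py * G r px px"
        using Bmat_colf[OF j(2)] rd by (simp add: G_def)
      moreover have "\<bar>G r py py\<bar> = (1/sqrt 2)^(L-1)" using abs_G[OF py py] e by simp
      moreover have "\<bar>G r px px\<bar> = (1/sqrt 2)^(L-1)" using abs_G[OF px px] e by simp
      ultimately show ?thesis using C j(1) by (intro exI[of _ j]) (simp add: abs_mult)
    next
      case F1: False
      show ?thesis
      proof (cases "lev py < lev px")
        case True
        hence e: "lev px = L" using lm L_def by auto
        obtain j where j: "j < 4^r" "colf r (haar0 r) px (haar r) px j"
          using idhw_bwd(1)[OF l1 lr] inl[OF e] by blast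
        have pp: "px > 0" using True by (cases px) auto
        have "Bmat r ?row j = G0 r py px * G r px px"
          using Bmat_colf[OF j(2)] rd by (simp add: G_def G0_def)
        moreover have "\<bar>G0 r py px\<bar> = (1/sqrt 2)^(L-1)" using abs_G0[OF py px] e True pp by simp
        moreover have "\<bar>G r px px\<bar> = (1/sqrt 2)^(L-1)" using abs_G[OF px px] e by simp
        ultimately show ?thesis using C j(1) by (intro exI[of _ j]) (simp add: abs_mult)
      next
        case False
        hence lt: "lev px < lev py" using F1 by auto
        hence e: "lev py = L" using lm L_def by auto
        obtain j where j: "j < 4^r" "colf r (haar r) py (haar0 r) py j"
          using idhw_bwd(2)[OF l1 lr] inl[OF e] by blast
        have pp: "py > 0" using lt by (cases py) auto
        have "Bmat r ?row j = G r py py * G0 r px py"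
          using Bmat_colf[OF j(2)] rd by (simp add: G_def G0_def)
        moreover have "\<bar>G0 r px py\<bar> = (1/sqrt 2)^(L-1)" using abs_G0[OF px py] e lt pp by simp
        moreover have "\<bar>G r py py\<bar> = (1/sqrt 2)^(L-1)" using abs_G[OF py py] e by simp
        ultimately show ?thesis using C j(1) by (intro exI[of _ j]) (simp add: abs_mult)
      qed
    qed
    thus ?thesis unfolding L_def .
  qed
qed

lemma coherence:
  assumes py: "py < 2^r" and px: "px < 2^r"
  shows "local_coherence r (2^r*py + px + 1) = (1/2)^(lev (max py px) - 1)"
proof -
  have s: "{\<bar>Bmat r (2^r*py + px + 1 - 1) j\<bar> | j. j < 4^r} = (\<lambda>j. \<bar>Bmat r (2^r*py + px) j\<bar>) ` {..<4^r}"
    by auto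
  show ?thesis unfolding local_coherence_def s
  proof (rule Max_eqI)
    show "finite ((\<lambda>j. \<bar>Bmat r (2^r*py + px) j\<bar>) ` {..<4^r})" by simp
    show "\<And>y. y \<in> (\<lambda>j. \<bar>Bmat r (2^r*py + px) j\<bar>) ` {..<4^r} \<Longrightarrow> y \<le> (1/2)^(lev (max py px) - 1)"
      using entry_bound[OF py px] by auto
    show "(1/2)^(lev (max py px) - 1) \<in> (\<lambda>j. \<bar>Bmat r (2^r*py + px) j\<bar>) ` {..<4^r}"
    proof -
      obtain j where "j < 4^r" "\<bar>Bmat r (2^r*py + px) j\<bar> = (1/2)^(lev (max py px) - 1)"
        using entry_attained[OF py px] by blast
      thus ?thesis by (intro image_eqI[where x=j]) auto
    qed
  qed
qed

lemma kappa_val: "kappa_xy (px+1) (py+1) = (1/2)^(lev (max px py) - 1)"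
proof (cases "max px py = 0")
  case True thus ?thesis by (auto simp: kappa_xy_def)
next
  case False
  hence m: "max (px+1) (py+1) \<noteq> 1" "real (max (px+1) (py+1)) - 1 = real (max px py)" by (auto simp: max_def)
  have fl: "\<lfloor>log 2 (real (max px py))\<rfloor> = int (lev (max px py) - 1)" using False lev_floor by auto
  have "2 powr (- real (lev (max px py) - 1)) = (1/2::real)^(lev (max px py) - 1)"
    by (simp add: powr_minus powr_realpow power_one_over inverse_eq_divide)
  moreover have "(1/2::real)^(lev (max px py) - 1) \<le> 1" by (simp add: power_le_one)
  ultimately show ?thesis using m fl by (simp add: kappa_xy_def)
qed



lemma split2: fixes n :: nat shows "(\<Sum>a<2*n. g a) = (\<Sum>a<n. g a) + (\<Sum>a\<in>{n..<2*n}. (g a :: real))"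
  using sum.atLeastLessThan_concat[of 0 n "2*n" g] by (simp add: atLeast0LessThan)

lemma Ssum: "(\<Sum>a<2^r. \<Sum>b<2^r. (1/4::real)^(lev (max a b) - 1)) = 1 + 3 * real r"
proof (induction r)
  case 0 thus ?case by simp
next
  case (Suc r)
  let ?n = "2^r :: nat"
  let ?f = "\<lambda>a b. (1/4::real)^(lev (max a b) - 1)"
  let ?c = "(1/4::real)^r"
  have top: "?f a b = ?c" if "a < 2*?n" "b < 2*?n" "?n \<le> max a b" for a b
  proof -
    have "lev (max a b) = Suc r" using lev_top[of r "max a b"] that by auto
    thus ?thesis by simp
  qed
  have "(\<Sum>a<2*?n. \<Sum>b<2*?n. ?f a b) = (\<Sum>a<?n. (\<Sum>b<?n. ?f a b) + (\<Sum>b\<in>{?n..<2*?n}. ?f a b))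
      + (\<Sum>a\<in>{?n..<2*?n}. \<Sum>b<2*?n. ?f a b)"
    by (simp add: split2)
  also have "\<dots> = (\<Sum>a<?n. (\<Sum>b<?n. ?f a b) + (\<Sum>b\<in>{?n..<2*?n}. ?c))
      + (\<Sum>a\<in>{?n..<2*?n}. \<Sum>b<2*?n. ?c)"
  proof -
    have h1: "(\<Sum>b\<in>{?n..<2*?n}. ?f a b) = (\<Sum>b\<in>{?n..<2*?n}. ?c)" if "a < ?n" for a
      by (rule sum.cong[OF refl], rule top) (use that in auto)
    have h2: "(\<Sum>b<2*?n. ?f a b) = (\<Sum>b<2*?n. ?c)" if "a \<in> {?n..<2*?n}" for a
      by (rule sum.cong[OF refl], rule top) (use that in auto)
    show ?thesis using h1 h2 by simp
  qed
  also have "\<dots> = (\<Sum>a<?n. \<Sum>b<?n. ?f a b) + real ?n * real ?n * ?c + real ?n * (2 * real ?n) * ?c"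
    by (simp add: sum.distrib)
  also have "\<dots> = (\<Sum>a<?n. \<Sum>b<?n. ?f a b) + 3 * (real ?n * real ?n * ?c)"
    by (simp add: algebra_simps)
  also have "real ?n * real ?n * ?c = 1"
  proof -
    have "(2::real)^r * 2^r = 4^r" by (simp flip: power_mult_distrib)
    thus ?thesis by (simp add: power_one_over)
  qed
  finally show ?case using Suc.IH by simp
qed

lemma kappa_sum: "(\<Sum>lp=1..(2^r)^2. (kappa_p (2^r) lp)^2) = 1 + 3 * real r"
proof -
  have "(\<Sum>lp=1..(2^r)^2. (kappa_p (2^r) lp)^2) = (\<Sum>k<2^r*2^r. (kappa_p (2^r) (Suc k))^2)"
    by (simp add: sum.atLeast1_atMost_eq power2_eq_square)
  also have "\<dots> = (\<Sum>k<2^r*2^r. (\<lambda>a b. (1/4::real)^(lev (max a b) - 1)) (k div 2^r) (k mod 2^r))"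
  proof (rule sum.cong[OF refl])
    fix k
    have "(kappa_p (2^r) (Suc k))^2 = ((1/2::real)^(lev (max (k mod 2^r) (k div 2^r)) - 1))^2"
      unfolding kappa_p_def using kappa_val[of "k mod 2^r" "k div 2^r"] by simp
    also have "\<dots> = (1/4::real)^(lev (max (k div 2^r) (k mod 2^r)) - 1)"
      by (simp add: power_mult_distrib[symmetric] power2_eq_square max.commute flip: power_mult_distrib)
    finally show "(kappa_p (2^r) (Suc k))^2 = (\<lambda>a b. (1/4::real)^(lev (max a b) - 1)) (k div 2^r) (k mod 2^r)" by simp
  qed
  also have "\<dots> = (\<Sum>a<2^r. \<Sum>b<2^r. (1/4::real)^(lev (max a b) - 1))"
    by (rule sum_divmod)
  finally show ?thesis using Ssum by simp
qed

theorem mainTheorem2: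
  fixes r Nbar Np :: nat
  assumes "r \<ge> 1" and "Nbar = 2^r" and "Np = Nbar^2"
  shows "(\<forall>lx\<in>{1..Nbar}. \<forall>ly\<in>{1..Nbar}.
            local_coherence r (Nbar * (ly - 1) + lx) = kappa_p Nbar (Nbar * (ly - 1) + lx)
            \<and> kappa_p Nbar (Nbar * (ly - 1) + lx) = kappa_xy lx ly)
         \<and> (\<Sum>lp=1..Np. (kappa_p Nbar lp)^2) = 1 + 3 * log 2 (real Nbar)"
proof
  show "\<forall>lx\<in>{1..Nbar}. \<forall>ly\<in>{1..Nbar}.
            local_coherence r (Nbar * (ly - 1) + lx) = kappa_p Nbar (Nbar * (ly - 1) + lx)
            \<and> kappa_p Nbar (Nbar * (ly - 1) + lx) = kappa_xy lx ly"
  proof (intro ballI)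
    fix lx ly assume lx: "lx \<in> {1..Nbar}" and ly: "ly \<in> {1..Nbar}"
    define px where "px = lx - 1"
    define py where "py = ly - 1"
    have b: "px < 2^r" "py < 2^r" using lx ly assms(2) by (auto simp: px_def py_def)
    have lp: "Nbar * (ly - 1) + lx = 2^r * py + px + 1" using lx assms(2) by (simp add: py_def px_def)
    have ex: "lx = px + 1" "ly = py + 1" using lx ly by (auto simp: px_def py_def)
    have k1: "kappa_p Nbar (Nbar * (ly - 1) + lx) = kappa_xy lx ly"
      unfolding lp kappa_p_def using b assms(2) ex by simp
    have c: "local_coherence r (2^r*py+px+1) = (1/2)^(lev (max py px) - 1)"
      by (rule coherence[OF b(2) b(1)])
    have kv: "kappa_xy lx ly = (1/2)^(lev (max py px) - 1)"
      using kappa_val[of px py] ex by (simp add: max.commute)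
    have "local_coherence r (Nbar * (ly - 1) + lx) = kappa_xy lx ly"
      by (subst lp, subst kv, rule c)
    thus "local_coherence r (Nbar * (ly - 1) + lx) = kappa_p Nbar (Nbar * (ly - 1) + lx)
            \<and> kappa_p Nbar (Nbar * (ly - 1) + lx) = kappa_xy lx ly" using k1 by simp
  qed
  show "(\<Sum>lp=1..Np. (kappa_p Nbar lp)^2) = 1 + 3 * log 2 (real Nbar)"
    using kappa_sum[of r] assms(2,3) by simp
qed


end
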